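(* Let $(V,\nu)$ be a strongly complete PN-space, $(W,\mu)$ a PN-space, and $(T_n)_{n\ge1}$ a sequence in $B(V,W)$ such that for every $x\in V$ the sequence $(T_nx)_{n\ge1}$ converges strongly in $W$. Define $T:V\to W$ by $Tx=\lim_{n\to\infty}T_nx$ (strong limit). Then $T$ is linear and $T\in B(V,W)$.
   Context: A distance distribution function is a map $F:[-\infty,+\infty]\to[0,1]$ that is nondecreasing, left-continuous on $\mathbb{R}$, with $F(-\infty)=0$, $F(+\infty)=1$ and $F(0)=0$; the set of these is $\Delta^+$. $\mathcal{D}^+\subseteq\Delta^+$ denotes the proper ones, i.e. those with $\lim_{x\to+\infty}F(x)=1$. $H_0\in\Delta^+$ is $H_0(x)=0$ for $x\le 0$ and $H_0(x)=1$ for $x>0$. For $F,G\in\Delta^+$ let $\tau_M(F,G)(x)=\sup\{\min(F(s),G(t)) : s+t=x\}$. In this paper a PN-space $(V,\nu)$ is a real vector space $V$ with a map $\nu:V\to\Delta^+$, $p\mapsto\nu_p$, such that for all $p,q\in V$: $\nu_p=H_0$ iff $p=0$; $\nu_{p+q}\ge\tau_M(\nu_p,\nu_q)$ pointwise; and $\nu_{\alpha p}(x)=\nu_p(x/|\alpha|)$ for all real $\alpha\neq0$ and $x\ge 0$. Standing assumption: $\nu_p\in\mathcal{D}^+$ for every $p\in V$. For $x\in V$ and $w\in(0,1)$ put $\|x\|_w=\sup\{t\in\mathbb{R}:\nu_x(t)<w\}$; for each $w$ this is a norm on $V$, and $w\mapsto\|x\|_w$ is nondecreasing. The strong topology on $V$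 is generated by the neighbourhoods $N_p(t)=\{q\in V:\nu_{p-q}(t)>1-t\}$, $p\in V$, $t>0$; equivalently the balls $\{x:\|x-p\|_w<r\}$ form a basis for it. A sequence $(p_n)$ converges strongly to $p$ if for every $t>0$ one has $p_n\in N_p(t)$ for all large $n$; it is strongly Cauchy if for every $t>0$ there is $N$ with $\nu_{p_n-p_m}(t)>1-t$ for all $m,n>N$. $(V,\nu)$ is strongly complete if every strongly Cauchy sequence converges strongly. $B(V,W)$ denotes the set of linear operators $V\to W$ that are continuous for the strong topologies. *)

theory Defs
  imports "HOL-Analysis.Analysis"
begin

text \<open>Distance distribution functions are represented by their restriction to the
real line (type real \<Rightarrow> real); the values at -\<infinity> and +\<infinity> are fixed
(0 and 1) by definition and so carry no information.\<close>

definition ddf :: "(real \<Rightarrow> real) \<Rightarrow> bool" where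
  "ddf F \<longleftrightarrow> mono F \<and> (\<forall>x. 0 \<le> F x \<and> F x \<le> 1)
      \<and> (\<forall>x. continuous (at_left x) F) \<and> F 0 = 0"

definition proper_ddf :: "(real \<Rightarrow> real) \<Rightarrow> bool" where
  "proper_ddf F \<longleftrightarrow> ddf F \<and> (F \<longlongrightarrow> 1) at_top"

definition H0 :: "real \<Rightarrow> real" where
  "H0 x = (if x \<le> 0 then 0 else 1)"

definition tauM :: "(real \<Rightarrow> real) \<Rightarrow> (real \<Rightarrow> real) \<Rightarrow> real \<Rightarrow> real" where
  "tauM F G x = Sup {min (F s) (G t) | s t. s + t = x}"

text \<open>PN-space, including the standing assumption that every \<nu>_p is proper.\<close>
definition pn_space :: "('v::real_vector \<Rightarrow> real \<Rightarrow> real) \<Rightarrow> bool" where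
  "pn_space \<nu> \<longleftrightarrow>
     (\<forall>p. ddf (\<nu> p) \<and> proper_ddf (\<nu> p))
   \<and> (\<forall>p. \<nu> p = H0 \<longleftrightarrow> p = 0)
   \<and> (\<forall>p q x. tauM (\<nu> p) (\<nu> q) x \<le> \<nu> (p + q) x)
   \<and> (\<forall>\<alpha> p x. \<alpha> \<noteq> 0 \<and> x \<ge> 0 \<longrightarrow> \<nu> (\<alpha> *\<^sub>R p) x = \<nu> p (x / \<bar>\<alpha>\<bar>))"

definition strong_nbhd :: "('v::real_vector \<Rightarrow> real \<Rightarrow> real) \<Rightarrow> 'v \<Rightarrow> real \<Rightarrow> 'v set" where
  "strong_nbhd \<nu> p t = {q. \<nu> (p - q) t > 1 - t}"

definition strong_open :: "('v::real_vector \<Rightarrow> real \<Rightarrow> real) \<Rightarrow> 'v set \<Rightarrow> bool" where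
  "strong_open \<nu> U \<longleftrightarrow> (\<forall>p\<in>U. \<exists>t>0. strong_nbhd \<nu> p t \<subseteq> U)"

definition strong_continuous ::
  "('v::real_vector \<Rightarrow> real \<Rightarrow> real) \<Rightarrow> ('w::real_vector \<Rightarrow> real \<Rightarrow> real) \<Rightarrow> ('v \<Rightarrow> 'w) \<Rightarrow> bool" where
  "strong_continuous \<nu> \<mu> f \<longleftrightarrow> (\<forall>U. strong_open \<mu> U \<longrightarrow> strong_open \<nu> (f -` U))"

definition strong_conv :: "('v::real_vector \<Rightarrow> real \<Rightarrow> real) \<Rightarrow> (nat \<Rightarrow> 'v) \<Rightarrow> 'v \<Rightarrow> bool" where
  "strong_conv \<nu> s p \<longleftrightarrow> (\<forall>t>0. eventually (\<lambda>n. s n \<in> strong_nbhd \<nu> p t) sequentially)"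

definition strong_cauchy :: "('v::real_vector \<Rightarrow> real \<Rightarrow> real) \<Rightarrow> (nat \<Rightarrow> 'v) \<Rightarrow> bool" where
  "strong_cauchy \<nu> s \<longleftrightarrow> (\<forall>t>0. \<exists>N. \<forall>m n. m > N \<and> n > N \<longrightarrow> \<nu> (s n - s m) t > 1 - t)"

definition strongly_complete :: "('v::real_vector \<Rightarrow> real \<Rightarrow> real) \<Rightarrow> bool" where
  "strongly_complete \<nu> \<longleftrightarrow> (\<forall>s. strong_cauchy \<nu> s \<longrightarrow> (\<exists>p. strong_conv \<nu> s p))"

definition bounded_ops ::
  "('v::real_vector \<Rightarrow> real \<Rightarrow> real) \<Rightarrow> ('w::real_vector \<Rightarrow> real \<Rightarrow> real) \<Rightarrow> ('v \<Rightarrow> 'w) set" where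
  "bounded_ops \<nu> \<mu> = {f. linear f \<and> strong_continuous \<nu> \<mu> f}"

end

theory Submission
  imports Defs
begin

definition pdn :: "('v::real_vector \<Rightarrow> real \<Rightarrow> real) \<Rightarrow> 'v \<Rightarrow> real" where
  "pdn \<nu> x = Inf {h. 0 < h \<and> 1 - h < \<nu> x h}"

lemma pn_ddf: "pn_space \<nu> \<Longrightarrow> ddf (\<nu> p)"
  by (simp add: pn_space_def)

lemma pn_mono: "pn_space \<nu> \<Longrightarrow> s \<le> t \<Longrightarrow> \<nu> x s \<le> \<nu> x t"
proof -
  assume "pn_space \<nu>" "s \<le> t"
  then have "mono (\<nu> x)" using pn_ddf[of \<nu> x] by (simp add: ddf_def)
  then show ?thesis using \<open>s \<le> t\<close> by (rule monoD)
qed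

lemma pn_bounds: "pn_space \<nu> \<Longrightarrow> 0 \<le> \<nu> x t \<and> \<nu> x t \<le> 1"
  using pn_ddf[of \<nu> x] by (simp add: ddf_def)

lemma pn_nonpos: assumes "pn_space \<nu>" "t \<le> 0" shows "\<nu> x t = 0"
proof -
  have "\<nu> x 0 = 0" using pn_ddf[OF assms(1), of x] by (simp add: ddf_def)
  then show ?thesis using pn_mono[OF assms(1) assms(2), of x] pn_bounds[OF assms(1), of x t] by simp
qed

lemma pn_leftcont: "pn_space \<nu> \<Longrightarrow> (\<nu> x \<longlongrightarrow> \<nu> x t) (at_left t)"
  using pn_ddf[of \<nu> x] by (simp add: ddf_def continuous_within)

lemma pdn_set_ne: "pn_space \<nu> \<Longrightarrow> 2 \<in> {h. 0 < h \<and> 1 - h < \<nu> x h}"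
  using pn_bounds[of \<nu> x 2] by auto

lemma pdn_bdd: "bdd_below {h::real. 0 < h \<and> 1 - h < \<nu> x h}"
  by (rule bdd_belowI[of _ 0]) auto

lemma pdn_nonneg: assumes "pn_space \<nu>" shows "0 \<le> pdn \<nu> x"
proof -
  have "{h. 0 < h \<and> 1 - h < \<nu> x h} \<noteq> {}" using pdn_set_ne[OF assms, of x] by blast
  then show ?thesis unfolding pdn_def by (rule cInf_greatest) auto
qed

lemma pdn_less: assumes "pn_space \<nu>" shows "pdn \<nu> x < t \<longleftrightarrow> 1 - t < \<nu> x t"
proof
  assume "pdn \<nu> x < t"
  then obtain h where h: "h \<in> {h. 0 < h \<and> 1 - h < \<nu> x h}" "h < t"
    unfolding pdn_def using cInf_lessD pdn_set_ne[OF assms] by blast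
  then show "1 - t < \<nu> x t" using pn_mono[OF assms, of h t x] by auto
next
  assume a: "1 - t < \<nu> x t"
  have tpos: "t > 0"
  proof (rule ccontr)
    assume "\<not> t > 0" then have "\<nu> x t = 0" using pn_nonpos[OF assms] by simp
    then show False using a \<open>\<not> t > 0\<close> by simp
  qed
  have "((\<lambda>h. \<nu> x h - (1 - h)) \<longlongrightarrow> \<nu> x t - (1 - t)) (at_left t)"
    by (intro tendsto_intros pn_leftcont[OF assms])
  then have "eventually (\<lambda>h. \<nu> x h - (1 - h) > 0) (at_left t)"
    using a by (intro order_tendstoD) auto
  moreover have "eventually (\<lambda>h. h \<in> {t/2<..<t}) (at_left t)"
    using tpos by (intro eventually_at_left_real) auto
  ultimately have "eventually (\<lambda>h. \<nu> x h - (1 - h) > 0 \<and> h \<in> {t/2<..<t}) (at_left t)"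
    by (rule eventually_conj)
  then obtain h where h: "\<nu> x h - (1 - h) > 0" "h \<in> {t/2<..<t}"
    using eventually_happens' trivial_limit_at_left_real by blast
  have "pdn \<nu> x \<le> h" unfolding pdn_def
    by (rule cInf_lower) (use h tpos pdn_bdd in auto)
  then show "pdn \<nu> x < t" using h by auto
qed

lemma pn_H0: "pn_space \<nu> \<Longrightarrow> \<nu> p = H0 \<longleftrightarrow> p = 0"
  by (simp add: pn_space_def)

lemma pn_tau: "pn_space \<nu> \<Longrightarrow> tauM (\<nu> p) (\<nu> q) x \<le> \<nu> (p + q) x"
  by (simp add: pn_space_def)

lemma pn_scale: "pn_space \<nu> \<Longrightarrow> \<alpha> \<noteq> 0 \<Longrightarrow> x \<ge> 0 \<Longrightarrow> \<nu> (\<alpha> *\<^sub>R p) x = \<nu> p (x / \<bar>\<alpha>\<bar>)"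
  unfolding pn_space_def by blast

lemma pdn_zero [simp]: assumes "pn_space \<nu>" shows "pdn \<nu> 0 = 0"
proof -
  have H: "\<nu> 0 = H0" using pn_H0[OF assms] by simp
  have "pdn \<nu> 0 \<le> 0"
  proof (rule field_le_epsilon)
    fix e :: real assume "0 < e"
    then have "1 - e < \<nu> 0 e" using H by (simp add: H0_def)
    then have "pdn \<nu> 0 < e" using pdn_less[OF assms, of 0 e] by simp
    then show "pdn \<nu> 0 \<le> 0 + e" by simp
  qed
  then show ?thesis using pdn_nonneg[OF assms, of 0] by simp
qed

lemma pdn_zero_iff: assumes "pn_space \<nu>" shows "pdn \<nu> x = 0 \<longleftrightarrow> x = 0"
proof
  assume z: "pdn \<nu> x = 0"
  have "\<nu> x = H0"
  proof
    fix t :: real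
    show "\<nu> x t = H0 t"
    proof (cases "t \<le> 0")
      case True then show ?thesis using pn_nonpos[OF assms] by (simp add: H0_def)
    next
      case False
      have "\<nu> x t \<ge> 1"
      proof (rule ccontr)
        assume a: "\<not> \<nu> x t \<ge> 1"
        define s where "s = min t (1 - \<nu> x t)"
        have sp: "s > 0" "s \<le> t" "s \<le> 1 - \<nu> x t" using a False by (auto simp: s_def)
        have "1 - s < \<nu> x s" using pdn_less[OF assms, of x s] z sp by simp
        moreover have "\<nu> x s \<le> \<nu> x t" using pn_mono[OF assms sp(2)] .
        ultimately show False using sp by simp
      qed
      then show ?thesis using pn_bounds[OF assms, of x t] False by (simp add: H0_def)
    qed
  qed
  then show "x = 0" using pn_H0[OF assms] by simp
qed (simp add: assms)

lemma pn_neg: assumes "pn_space \<nu>" shows "\<nu> (- x) = \<nu> x"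
proof
  fix t :: real
  show "\<nu> (- x) t = \<nu> x t"
  proof (cases "t \<ge> 0")
    case True
    have "\<nu> ((-1) *\<^sub>R x) t = \<nu> x (t / \<bar>-1\<bar>)" by (rule pn_scale[OF assms _ True]) simp
    then show ?thesis by simp
  next
    case False then show ?thesis using pn_nonpos[OF assms] by simp
  qed
qed

lemma pdn_neg: "pn_space \<nu> \<Longrightarrow> pdn \<nu> (- x) = pdn \<nu> x"
  unfolding pdn_def using pn_neg[of \<nu> x] by simp

lemma pdn_add: assumes "pn_space \<nu>" shows "pdn \<nu> (x + y) \<le> pdn \<nu> x + pdn \<nu> y"
proof (rule field_le_epsilon)
  fix e :: real assume e: "0 < e"
  define a where "a = pdn \<nu> x + e/2"
  define b where "b = pdn \<nu> y + e/2"
  have apos: "a > 0" "b > 0" using e pdn_nonneg[OF assms, of x] pdn_nonneg[OF assms, of y]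
    by (auto simp: a_def b_def)
  have ha: "1 - a < \<nu> x a" using pdn_less[OF assms, of x a] e by (simp add: a_def)
  have hb: "1 - b < \<nu> y b" using pdn_less[OF assms, of y b] e by (simp add: b_def)
  have "min (\<nu> x a) (\<nu> y b) \<le> tauM (\<nu> x) (\<nu> y) (a + b)"
    unfolding tauM_def
  proof (rule cSup_upper)
    show "min (\<nu> x a) (\<nu> y b) \<in> {min (\<nu> x s) (\<nu> y t) |s t. s + t = a + b}" by blast
    show "bdd_above {min (\<nu> x s) (\<nu> y t) |s t. s + t = a + b}"
      by (rule bdd_aboveI[of _ 1]) (clarsimp, metis min.coboundedI1 pn_bounds[OF assms])
  qed
  also have "\<dots> \<le> \<nu> (x + y) (a + b)" by (rule pn_tau[OF assms])
  finally have "1 - (a + b) < \<nu> (x + y) (a + b)" using ha hb apos by linarith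
  then have "pdn \<nu> (x + y) < a + b" using pdn_less[OF assms] by blast
  then show "pdn \<nu> (x + y) \<le> pdn \<nu> x + pdn \<nu> y + e" by (simp add: a_def b_def)
qed

lemma pdn_tri: assumes "pn_space \<nu>" shows "pdn \<nu> (x - z) \<le> pdn \<nu> (x - y) + pdn \<nu> (y - z)"
  using pdn_add[OF assms, of "x - y" "y - z"] by simp

lemma pdn_commute: assumes "pn_space \<nu>" shows "pdn \<nu> (x - y) = pdn \<nu> (y - x)"
  using pdn_neg[OF assms, of "x - y"] by simp

lemma pdn_diff: assumes "pn_space \<nu>" shows "pdn \<nu> (x - y) \<le> pdn \<nu> x + pdn \<nu> y"
  using pdn_add[OF assms, of x "- y"] pdn_neg[OF assms, of y] by simp

lemma pdn_scale_le1: assumes "pn_space \<nu>" "\<bar>c\<bar> \<le> 1" shows "pdn \<nu> (c *\<^sub>R x) \<le> pdn \<nu> x"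
proof (cases "c = 0")
  case True then show ?thesis using pdn_nonneg[OF assms(1)] assms by simp
next
  case False
  show ?thesis
  proof (rule field_le_epsilon)
    fix e :: real assume e: "0 < e"
    define t where "t = pdn \<nu> x + e"
    have tp: "t > 0" using e pdn_nonneg[OF assms(1), of x] by (simp add: t_def)
    have "1 - t < \<nu> x t" using pdn_less[OF assms(1), of x t] e by (simp add: t_def)
    moreover have "t \<le> t / \<bar>c\<bar>" using tp False assms(2) by (simp add: le_divide_eq)
    then have "\<nu> x t \<le> \<nu> x (t / \<bar>c\<bar>)" by (rule pn_mono[OF assms(1)])
    moreover have "\<nu> (c *\<^sub>R x) t = \<nu> x (t / \<bar>c\<bar>)" using pn_scale[OF assms(1) False] tp by simp
    ultimately have "1 - t < \<nu> (c *\<^sub>R x) t" by simp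
    then have "pdn \<nu> (c *\<^sub>R x) < t" using pdn_less[OF assms(1)] by blast
    then show "pdn \<nu> (c *\<^sub>R x) \<le> pdn \<nu> x + e" by (simp add: t_def)
  qed
qed

lemma pdn_nat: assumes "pn_space \<nu>" shows "pdn \<nu> (of_nat m *\<^sub>R x) \<le> of_nat m * pdn \<nu> x"
proof (induction m)
  case 0 then show ?case using assms by simp
next
  case (Suc m)
  have "pdn \<nu> (of_nat (Suc m) *\<^sub>R x) = pdn \<nu> (x + of_nat m *\<^sub>R x)" by (simp add: algebra_simps)
  also have "\<dots> \<le> pdn \<nu> x + pdn \<nu> (of_nat m *\<^sub>R x)" by (rule pdn_add[OF assms])
  also have "\<dots> \<le> of_nat (Suc m) * pdn \<nu> x" using Suc by (simp add: algebra_simps)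
  finally show ?case .
qed

lemma pdn_scale: assumes "pn_space \<nu>" obtains K :: real where "K > 0" "\<And>x. pdn \<nu> (c *\<^sub>R x) \<le> K * pdn \<nu> x"
proof -
  define m where "m = nat \<lceil>\<bar>c\<bar>\<rceil> + 1"
  have "m \<ge> 1" by (simp add: m_def)
  then have mpos: "real m > 0" by simp
  have "\<bar>c\<bar> \<le> of_int \<lceil>\<bar>c\<bar>\<rceil>" by (rule le_of_int_ceiling)
  then have "\<bar>c\<bar> < 1 + real_of_int \<lceil>\<bar>c\<bar>\<rceil>" by linarith
  then have cm: "\<bar>c\<bar> < real m" by (simp add: m_def)
  have le1: "\<bar>c / real m\<bar> \<le> 1"
  proof -
    have "\<bar>c / real m\<bar> = \<bar>c\<bar> / real m" using mpos by simp
    also have "\<dots> \<le> 1" using cm mpos by simp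
    finally show ?thesis .
  qed
  have main: "pdn \<nu> (c *\<^sub>R x) \<le> real m * pdn \<nu> x" for x
  proof -
    have eq: "c *\<^sub>R x = of_nat m *\<^sub>R ((c / real m) *\<^sub>R x)" using mpos by simp
    have "pdn \<nu> (c *\<^sub>R x) \<le> real m * pdn \<nu> ((c / real m) *\<^sub>R x)"
      unfolding eq by (rule pdn_nat[OF assms])
    also have "\<dots> \<le> real m * pdn \<nu> x"
      using pdn_scale_le1[OF assms le1, of x] mpos by (intro mult_left_mono) auto
    finally show ?thesis .
  qed
  show ?thesis by (rule that[OF mpos main])
qed

lemma strong_nbhd_pdn: "pn_space \<nu> \<Longrightarrow> strong_nbhd \<nu> p t = {q. pdn \<nu> (p - q) < t}"
  unfolding strong_nbhd_def by (simp add: pdn_less)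

lemma strong_conv_pdn: "pn_space \<nu> \<Longrightarrow>
    strong_conv \<nu> s p \<longleftrightarrow> (\<forall>t>0. eventually (\<lambda>n. pdn \<nu> (p - s n) < t) sequentially)"
  unfolding strong_conv_def by (simp add: strong_nbhd_pdn)

lemma conv_ev: "pn_space \<nu> \<Longrightarrow> strong_conv \<nu> s p \<Longrightarrow> t > 0 \<Longrightarrow>
    eventually (\<lambda>n. pdn \<nu> (p - s n) < t) sequentially"
  using strong_conv_pdn[of \<nu> s p] by blast

lemma pdn_le_zero: assumes "pn_space \<nu>" "\<And>e. e > 0 \<Longrightarrow> pdn \<nu> x < e" shows "x = 0"
proof -
  have "pdn \<nu> x \<le> 0"
  proof (rule field_le_epsilon)
    fix e :: real assume "0 < e" then show "pdn \<nu> x \<le> 0 + e" using assms(2)[of e] by simp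
  qed
  then have "pdn \<nu> x = 0" using pdn_nonneg[OF assms(1), of x] by simp
  then show ?thesis using pdn_zero_iff[OF assms(1)] by simp
qed

lemma conv_unique:
  assumes nu: "pn_space \<nu>" and a: "strong_conv \<nu> s p" and b: "strong_conv \<nu> s q"
  shows "p = q"
proof -
  have "p - q = 0"
  proof (rule pdn_le_zero[OF nu])
    fix e :: real assume e: "e > 0"
    have "eventually (\<lambda>n. pdn \<nu> (p - s n) < e/2) sequentially"
      using conv_ev[OF nu a, of "e/2"] e by simp
    moreover have "eventually (\<lambda>n. pdn \<nu> (q - s n) < e/2) sequentially"
      using conv_ev[OF nu b, of "e/2"] e by simp
    ultimately have "eventually (\<lambda>n. pdn \<nu> (p - s n) < e/2 \<and> pdn \<nu> (q - s n) < e/2) sequentially"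
      by (rule eventually_conj)
    then obtain n where n: "pdn \<nu> (p - s n) < e/2" "pdn \<nu> (q - s n) < e/2"
      using eventually_sequentially by auto
    have "pdn \<nu> (p - q) \<le> pdn \<nu> (p - s n) + pdn \<nu> (s n - q)" by (rule pdn_tri[OF nu])
    also have "pdn \<nu> (s n - q) = pdn \<nu> (q - s n)" by (rule pdn_commute[OF nu])
    finally show "pdn \<nu> (p - q) < e" using n by simp
  qed
  then show ?thesis by simp
qed

lemma cont_metric:
  assumes nu: "pn_space \<nu>" and mu: "pn_space \<mu>" and c: "strong_continuous \<nu> \<mu> f" and e: "0 < e"
  shows "\<exists>\<delta>>0. \<forall>y. pdn \<nu> (x - y) < \<delta> \<longrightarrow> pdn \<mu> (f x - f y) < e"
proof -
  define U where "U = strong_nbhd \<mu> (f x) e"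
  have U: "U = {q. pdn \<mu> (f x - q) < e}" unfolding U_def by (rule strong_nbhd_pdn[OF mu])
  have "strong_open \<mu> U"
    unfolding strong_open_def
  proof
    fix p assume "p \<in> U"
    then have p: "pdn \<mu> (f x - p) < e" using U by simp
    define t where "t = e - pdn \<mu> (f x - p)"
    have "t > 0" using p by (simp add: t_def)
    moreover have "strong_nbhd \<mu> p t \<subseteq> U"
    proof
      fix q assume "q \<in> strong_nbhd \<mu> p t"
      then have "pdn \<mu> (p - q) < t" using strong_nbhd_pdn[OF mu] by simp
      moreover have "pdn \<mu> (f x - q) \<le> pdn \<mu> (f x - p) + pdn \<mu> (p - q)" by (rule pdn_tri[OF mu])
      ultimately show "q \<in> U" using U by (simp add: t_def)
    qed
    ultimately show "\<exists>t>0. strong_nbhd \<mu> p t \<subseteq> U" by blast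
  qed
  then have "strong_open \<nu> (f -` U)" using c unfolding strong_continuous_def by blast
  moreover have "x \<in> f -` U" using U e mu by simp
  ultimately obtain t where t: "t > 0" "strong_nbhd \<nu> x t \<subseteq> f -` U"
    unfolding strong_open_def by blast
  have "\<forall>y. pdn \<nu> (x - y) < t \<longrightarrow> pdn \<mu> (f x - f y) < e"
  proof (intro allI impI)
    fix y assume "pdn \<nu> (x - y) < t"
    then have "y \<in> strong_nbhd \<nu> x t" using strong_nbhd_pdn[OF nu] by simp
    then have "f y \<in> U" using t by blast
    then show "pdn \<mu> (f x - f y) < e" using U by simp
  qed
  then show ?thesis using t by blast
qed

lemma metric_cont:
  assumes nu: "pn_space \<nu>" and mu: "pn_space \<mu>"
    and c: "\<And>x e. 0 < e \<Longrightarrow> \<exists>\<delta>>0. \<forall>y. pdn \<nu> (x - y) < \<delta> \<longrightarrow> pdn \<mu> (f x - f y) < e"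
  shows "strong_continuous \<nu> \<mu> f"
  unfolding strong_continuous_def
proof (intro allI impI)
  fix U assume U: "strong_open \<mu> U"
  show "strong_open \<nu> (f -` U)"
    unfolding strong_open_def
  proof
    fix p assume "p \<in> f -` U"
    then obtain e where e: "e > 0" "strong_nbhd \<mu> (f p) e \<subseteq> U"
      using U unfolding strong_open_def by blast
    obtain \<delta> where d: "\<delta> > 0" "\<forall>y. pdn \<nu> (p - y) < \<delta> \<longrightarrow> pdn \<mu> (f p - f y) < e"
      using c[OF e(1)] by blast
    have "strong_nbhd \<nu> p \<delta> \<subseteq> f -` U"
    proof
      fix q assume "q \<in> strong_nbhd \<nu> p \<delta>"
      then have "pdn \<nu> (p - q) < \<delta>" using strong_nbhd_pdn[OF nu] by simp
      then have "pdn \<mu> (f p - f q) < e" using d by blast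
      then have "f q \<in> strong_nbhd \<mu> (f p) e" using strong_nbhd_pdn[OF mu] by simp
      then show "q \<in> f -` U" using e by blast
    qed
    then show "\<exists>t>0. strong_nbhd \<nu> p t \<subseteq> f -` U" using d by blast
  qed
qed

theorem theorem4p12:
  fixes \<nu> :: "'v::real_vector \<Rightarrow> real \<Rightarrow> real"
    and \<mu> :: "'w::real_vector \<Rightarrow> real \<Rightarrow> real"
    and Ts :: "nat \<Rightarrow> 'v \<Rightarrow> 'w"
    and T :: "'v \<Rightarrow> 'w"
  assumes "pn_space \<nu>" and "strongly_complete \<nu>"
    and "pn_space \<mu>"
    and "\<And>n. Ts n \<in> bounded_ops \<nu> \<mu>"
    and "\<And>x. strong_conv \<mu> (\<lambda>n. Ts n x) (T x)"
  shows "linear T \<and> T \<in> bounded_ops \<nu> \<mu>"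
proof -
  note nu = assms(1) and mu = assms(3)
  have lin: "linear (Ts n)" and cont: "strong_continuous \<nu> \<mu> (Ts n)" for n
    using assms(4)[of n] by (auto simp: bounded_ops_def)
  have add: "Ts n (x + y) = Ts n x + Ts n y" for n x y
    using lin[of n] by (simp add: linear_iff)
  have scale: "Ts n (c *\<^sub>R x) = c *\<^sub>R Ts n x" for n c x
    using lin[of n] by (simp add: linear_iff)
  have Ts0: "Ts n 0 = 0" for n
    using scale[of n 0 0] by simp
  have conv: "strong_conv \<mu> (\<lambda>n. Ts n x) (T x)" for x by (rule assms(5))

  have Tadd: "T (x + y) = T x + T y" for x y
  proof -
    have "strong_conv \<mu> (\<lambda>n. Ts n (x + y)) (T x + T y)"
      unfolding strong_conv_pdn[OF mu]
    proof (intro allI impI)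
      fix t :: real assume t: "t > 0"
      have "eventually (\<lambda>n. pdn \<mu> (T x - Ts n x) < t/2) sequentially"
        using conv_ev[OF mu conv[of x], of "t/2"] t by simp
      moreover have "eventually (\<lambda>n. pdn \<mu> (T y - Ts n y) < t/2) sequentially"
        using conv_ev[OF mu conv[of y], of "t/2"] t by simp
      ultimately show "eventually (\<lambda>n. pdn \<mu> (T x + T y - Ts n (x + y)) < t) sequentially"
      proof eventually_elim
        case (elim n)
        have "T x + T y - Ts n (x + y) = (T x - Ts n x) + (T y - Ts n y)" by (simp add: add)
        then have "pdn \<mu> (T x + T y - Ts n (x + y)) \<le> pdn \<mu> (T x - Ts n x) + pdn \<mu> (T y - Ts n y)"
          using pdn_add[OF mu] by metis
        then show ?case using elim by simp
      qed
    qed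
    then show ?thesis using conv_unique[OF mu conv[of "x + y"]] by blast
  qed
  have Tscale: "T (c *\<^sub>R x) = c *\<^sub>R T x" for c x
  proof -
    obtain K where K: "K > 0" "\<And>z. pdn \<mu> (c *\<^sub>R z) \<le> K * pdn \<mu> z"
      using pdn_scale[OF mu] by blast
    have "strong_conv \<mu> (\<lambda>n. Ts n (c *\<^sub>R x)) (c *\<^sub>R T x)"
      unfolding strong_conv_pdn[OF mu]
    proof (intro allI impI)
      fix t :: real assume t: "t > 0"
      have "eventually (\<lambda>n. pdn \<mu> (T x - Ts n x) < t / K) sequentially"
        using conv_ev[OF mu conv[of x], of "t/K"] t K by simp
      then show "eventually (\<lambda>n. pdn \<mu> (c *\<^sub>R T x - Ts n (c *\<^sub>R x)) < t) sequentially"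
      proof eventually_elim
        case (elim n)
        have "c *\<^sub>R T x - Ts n (c *\<^sub>R x) = c *\<^sub>R (T x - Ts n x)" by (simp add: scale algebra_simps)
        then have "pdn \<mu> (c *\<^sub>R T x - Ts n (c *\<^sub>R x)) \<le> K * pdn \<mu> (T x - Ts n x)"
          using K(2) by metis
        also have "\<dots> < K * (t / K)" using elim K by (intro mult_strict_left_mono) auto
        also have "\<dots> = t" using K by simp
        finally show ?case .
      qed
    qed
    then show ?thesis using conv_unique[OF mu conv[of "c *\<^sub>R x"]] by blast
  qed
  have linT: "linear T" by (rule linearI) (auto simp: Tadd Tscale)

  interpret M: Metric_space UNIV "\<lambda>x y. pdn \<nu> (x - y)"
  proof
    show "0 \<le> pdn \<nu> (x - y)" for x y by (rule pdn_nonneg[OF nu])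
    show "pdn \<nu> (x - y) = pdn \<nu> (y - x)" for x y by (rule pdn_commute[OF nu])
    show "pdn \<nu> (x - y) = 0 \<longleftrightarrow> x = y" for x y using pdn_zero_iff[OF nu, of "x - y"] by simp
    show "pdn \<nu> (x - z) \<le> pdn \<nu> (x - y) + pdn \<nu> (y - z)" for x y z by (rule pdn_tri[OF nu])
  qed

  have compl: "M.mcomplete"
    unfolding M.mcomplete_def
  proof (intro allI impI)
    fix \<sigma> assume "M.MCauchy \<sigma>"
    then have C: "\<forall>\<epsilon>>0. \<exists>N. \<forall>n n'. N \<le> n \<longrightarrow> N \<le> n' \<longrightarrow> pdn \<nu> (\<sigma> n - \<sigma> n') < \<epsilon>"
      unfolding M.MCauchy_def by blast
    have "strong_cauchy \<nu> \<sigma>"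
      unfolding strong_cauchy_def
    proof (intro allI impI)
      fix t :: real assume "t > 0"
      then obtain N where N: "\<forall>n n'. N \<le> n \<longrightarrow> N \<le> n' \<longrightarrow> pdn \<nu> (\<sigma> n - \<sigma> n') < t" using C by blast
      have "\<forall>m n. N < m \<and> N < n \<longrightarrow> 1 - t < \<nu> (\<sigma> n - \<sigma> m) t"
      proof (intro allI impI)
        fix m n assume "N < m \<and> N < n"
        then have "pdn \<nu> (\<sigma> n - \<sigma> m) < t" using N by simp
        then show "1 - t < \<nu> (\<sigma> n - \<sigma> m) t" using pdn_less[OF nu] by blast
      qed
      then show "\<exists>N. \<forall>m n. N < m \<and> N < n \<longrightarrow> 1 - t < \<nu> (\<sigma> n - \<sigma> m) t" by blast
    qed
    then obtain p where p: "strong_conv \<nu> \<sigma> p" using assms(2) unfolding strongly_complete_def by blast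
    have "limitin M.mtopology \<sigma> p sequentially"
      unfolding M.limitin_metric
    proof (intro conjI allI impI)
      fix \<epsilon> :: real assume "\<epsilon> > 0"
      then have "eventually (\<lambda>n. pdn \<nu> (p - \<sigma> n) < \<epsilon>) sequentially" by (rule conv_ev[OF nu p])
      then show "eventually (\<lambda>n. \<sigma> n \<in> UNIV \<and> pdn \<nu> (\<sigma> n - p) < \<epsilon>) sequentially"
        by eventually_elim (simp add: pdn_commute[OF nu, of _ p])
    qed simp
    then show "\<exists>x. limitin M.mtopology \<sigma> x sequentially" by blast
  qed

  have c0: "\<exists>\<delta>>0. \<forall>y. pdn \<nu> y < \<delta> \<longrightarrow> pdn \<mu> (T y) < e" if e: "e > 0" for e
  proof -
    define r where "r = e / 4"
    have r: "r > 0" using e by (simp add: r_def)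
    define A where "A N = {x. \<forall>n k. N \<le> n \<longrightarrow> N \<le> k \<longrightarrow> pdn \<mu> (Ts n x - Ts k x) \<le> r}" for N
    have cover: "\<Union>(range A) = UNIV"
    proof (intro set_eqI iffI)
      fix x :: 'v
      have "eventually (\<lambda>n. pdn \<mu> (T x - Ts n x) < r/2) sequentially"
        using conv_ev[OF mu conv[of x], of "r/2"] r by simp
      then obtain N where N: "\<And>n. n \<ge> N \<Longrightarrow> pdn \<mu> (T x - Ts n x) < r/2"
        unfolding eventually_sequentially by blast
      have "x \<in> A N" unfolding A_def
      proof (intro CollectI allI impI)
        fix n k assume "N \<le> n" "N \<le> k"
        have "pdn \<mu> (Ts n x - Ts k x) \<le> pdn \<mu> (Ts n x - T x) + pdn \<mu> (T x - Ts k x)"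
          by (rule pdn_tri[OF mu])
        also have "pdn \<mu> (Ts n x - T x) = pdn \<mu> (T x - Ts n x)" by (rule pdn_commute[OF mu])
        finally show "pdn \<mu> (Ts n x - Ts k x) \<le> r" using N[OF \<open>N \<le> n\<close>] N[OF \<open>N \<le> k\<close>] by simp
      qed
      then show "x \<in> \<Union>(range A)" by blast
    qed simp
    have closed: "closedin M.mtopology (A N)" for N
      unfolding closedin_def
    proof
      show "A N \<subseteq> topspace M.mtopology" by simp
      show "openin M.mtopology (topspace M.mtopology - A N)"
        unfolding M.openin_mtopology
      proof (intro conjI allI impI)
        show "topspace M.mtopology - A N \<subseteq> UNIV" by simp
        fix x assume "x \<in> topspace M.mtopology - A N"
        then obtain n k where nk: "N \<le> n" "N \<le> k" "pdn \<mu> (Ts n x - Ts k x) > r"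
          unfolding A_def by auto
        define g where "g = pdn \<mu> (Ts n x - Ts k x) - r"
        have g: "g > 0" using nk by (simp add: g_def)
        obtain \<delta>1 where d1: "\<delta>1 > 0" "\<forall>y. pdn \<nu> (x - y) < \<delta>1 \<longrightarrow> pdn \<mu> (Ts n x - Ts n y) < g/2"
          using cont_metric[OF nu mu cont[of n], of "g/2" x] g by auto
        obtain \<delta>2 where d2: "\<delta>2 > 0" "\<forall>y. pdn \<nu> (x - y) < \<delta>2 \<longrightarrow> pdn \<mu> (Ts k x - Ts k y) < g/2"
          using cont_metric[OF nu mu cont[of k], of "g/2" x] g by auto
        have "M.mball x (min \<delta>1 \<delta>2) \<subseteq> topspace M.mtopology - A N"
        proof
          fix y assume "y \<in> M.mball x (min \<delta>1 \<delta>2)"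
          then have y: "pdn \<nu> (x - y) < \<delta>1" "pdn \<nu> (x - y) < \<delta>2" by (auto simp: M.mball_def)
          have "pdn \<mu> (Ts n x - Ts k x) \<le> pdn \<mu> (Ts n x - Ts n y) + pdn \<mu> (Ts n y - Ts k x)"
            by (rule pdn_tri[OF mu])
          also have "pdn \<mu> (Ts n y - Ts k x) \<le> pdn \<mu> (Ts n y - Ts k y) + pdn \<mu> (Ts k y - Ts k x)"
            by (rule pdn_tri[OF mu])
          also have "pdn \<mu> (Ts k y - Ts k x) = pdn \<mu> (Ts k x - Ts k y)" by (rule pdn_commute[OF mu])
          finally have "pdn \<mu> (Ts n x - Ts k x) \<le> pdn \<mu> (Ts n x - Ts n y) + (pdn \<mu> (Ts n y - Ts k y) + pdn \<mu> (Ts k x - Ts k y))"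
            by simp
          moreover have "pdn \<mu> (Ts n x - Ts n y) < g/2" using d1(2) y(1) by blast
          moreover have "pdn \<mu> (Ts k x - Ts k y) < g/2" using d2(2) y(2) by blast
          ultimately have "pdn \<mu> (Ts n y - Ts k y) > r" by (simp add: g_def)
          then have "y \<notin> A N" using nk unfolding A_def by force
          then show "y \<in> topspace M.mtopology - A N" by simp
        qed
        then show "\<exists>r>0. M.mball x r \<subseteq> topspace M.mtopology - A N" using d1 d2 by (intro exI[of _ "min \<delta>1 \<delta>2"]) auto
      qed
    qed
    have "\<exists>N. M.mtopology interior_of A N \<noteq> {}"
    proof (rule ccontr)
      assume "\<not> (\<exists>N. M.mtopology interior_of A N \<noteq> {})"
      then have "M.mtopology interior_of \<Union>(range A) = {}"
        by (intro M.metric_Baire_category_alt[OF compl]) (auto simp: closed)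
      then show False using cover interior_of_topspace[of M.mtopology] M.topspace_mtopology by simp
    qed
    then obtain N where "M.mtopology interior_of A N \<noteq> {}" by blast
    then obtain x0 U where U: "openin M.mtopology U" "x0 \<in> U" "U \<subseteq> A N"
      unfolding interior_of_def by blast
    then obtain \<rho> where rho: "\<rho> > 0" "M.mball x0 \<rho> \<subseteq> U"
      unfolding M.openin_mtopology by blast
    have inA: "x0 + y \<in> A N" if "pdn \<nu> y < \<rho>" for y
    proof -
      have "pdn \<nu> (x0 - (x0 + y)) = pdn \<nu> y" using pdn_neg[OF nu, of y] by simp
      then have "x0 + y \<in> M.mball x0 \<rho>" using that by (simp add: M.mball_def)
      then show ?thesis using rho U by blast
    qed
    have x0A: "x0 \<in> A N" using inA[of 0] rho nu by simp
    have bound: "pdn \<mu> (Ts n y - Ts N y) \<le> 2 * r" if "pdn \<nu> y < \<rho>" "N \<le> n" for y n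
    proof -
      have "Ts n y - Ts N y = (Ts n (x0 + y) - Ts N (x0 + y)) - (Ts n x0 - Ts N x0)"
        by (simp add: add algebra_simps)
      then have "pdn \<mu> (Ts n y - Ts N y) \<le> pdn \<mu> (Ts n (x0 + y) - Ts N (x0 + y)) + pdn \<mu> (Ts n x0 - Ts N x0)"
        using pdn_diff[OF mu] by metis
      moreover have "pdn \<mu> (Ts n (x0 + y) - Ts N (x0 + y)) \<le> r"
        using inA[OF that(1)] that(2) unfolding A_def by blast
      moreover have "pdn \<mu> (Ts n x0 - Ts N x0) \<le> r"
        using x0A that(2) unfolding A_def by blast
      ultimately show ?thesis by simp
    qed
    obtain \<delta>' where d': "\<delta>' > 0" "\<forall>y. pdn \<nu> (0 - y) < \<delta>' \<longrightarrow> pdn \<mu> (Ts N 0 - Ts N y) < r"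
      using cont_metric[OF nu mu cont[of N], of r 0] r by auto
    have "\<forall>y. pdn \<nu> y < min \<rho> \<delta>' \<longrightarrow> pdn \<mu> (T y) < e"
    proof (intro allI impI)
      fix y assume y: "pdn \<nu> y < min \<rho> \<delta>'"
      have "pdn \<nu> (0 - y) = pdn \<nu> y" using pdn_neg[OF nu, of y] by simp
      then have "pdn \<mu> (Ts N 0 - Ts N y) < r" using d' y by simp
      then have a: "pdn \<mu> (Ts N y) < r" using pdn_neg[OF mu, of "Ts N y"] by (simp add: Ts0)
      have "eventually (\<lambda>n. pdn \<mu> (T y - Ts n y) < r) sequentially"
        using conv_ev[OF mu conv[of y], of r] r by simp
      then obtain M where M: "\<And>n. n \<ge> M \<Longrightarrow> pdn \<mu> (T y - Ts n y) < r"
        unfolding eventually_sequentially by blast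
      define n where "n = max M N"
      have b: "pdn \<mu> (T y - Ts n y) < r" using M by (simp add: n_def)
      have c: "pdn \<mu> (Ts n y - Ts N y) \<le> 2 * r" using bound[of y n] y by (simp add: n_def)
      have "pdn \<mu> (T y - Ts N y) \<le> pdn \<mu> (T y - Ts n y) + pdn \<mu> (Ts n y - Ts N y)"
        by (rule pdn_tri[OF mu])
      moreover have "pdn \<mu> (T y) \<le> pdn \<mu> (T y - Ts N y) + pdn \<mu> (Ts N y)"
        using pdn_add[OF mu, of "T y - Ts N y" "Ts N y"] by simp
      ultimately show "pdn \<mu> (T y) < e" using a b c by (simp add: r_def)
    qed
    then show ?thesis using rho d' by (intro exI[of _ "min \<rho> \<delta>'"]) auto
  qed

  have "strong_continuous \<nu> \<mu> T"
  proof (rule metric_cont[OF nu mu])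
    fix x and e :: real assume "0 < e"
    then obtain \<delta> where d: "\<delta> > 0" "\<forall>y. pdn \<nu> y < \<delta> \<longrightarrow> pdn \<mu> (T y) < e" using c0 by blast
    have "T x - T y = T (x - y)" for y using linear_diff[OF linT] by simp
    then show "\<exists>\<delta>>0. \<forall>y. pdn \<nu> (x - y) < \<delta> \<longrightarrow> pdn \<mu> (T x - T y) < e" using d by auto
  qed
  then show ?thesis using linT by (simp add: bounded_ops_def)
qed

end
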